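(* Let $K$ be a finite field of characteristic $p$ and order $q$, let $s$ be a positive integer with $\gcd(s,q-1)=1$, and let $\tau$ be the permutation of $\mathcal{W}_{K,s}$ defined below. If $p=2$, the cycle type of $\tau$ consists of $|\mathcal{W}_{K,s}|$ instances of $1$. If $p$ is odd, the cycle type of $\tau$ contains no number larger than $(p-1)/2$.
   Context: $\zeta=\exp(2\pi i/p)$, $\psi(x)=\zeta^{\mathrm{Tr}(x)}$ with $\mathrm{Tr}$ the absolute trace of $K$ to $\mathbb{F}_p$; $W_u=\sum_{x\in K}\psi(x^s-ux)$; $\mathcal{W}_{K,s}=\{W_u:u\in K^\times\}$. Let $\gamma$ be a primitive element of $\mathbb{F}_p$ and $\sigma\in\mathrm{Gal}(\mathbb{Q}(\zeta)/\mathbb{Q})$ with $\sigma(\zeta)=\zeta^\gamma$; it is known that $\sigma(W_u)=W_{\gamma^{1-1/s}u}$ (with $1/s$ the inverse of $s$ mod $p-1$), so $\sigma$ restricts to a permutation $\tau$ of $\mathcal{W}_{K,s}$. The cycle type of a permutation is the multiset of lengths of the cycles in its decomposition into disjoint cycles. *)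

theory Defs
  imports Complex_Main "HOL-Number_Theory.Number_Theory" "HOL-Library.Multiset" "HOL-Library.Cardinality"
begin

definition field_degree :: "'a::{field,finite} itself \<Rightarrow> nat" where
  "field_degree (t::'a itself) = (THE n. CHAR('a) ^ n = CARD('a))"

definition abs_trace :: "'a::{field,finite} \<Rightarrow> 'a" where
  "abs_trace x = (\<Sum>i<field_degree TYPE('a). x ^ (CHAR('a) ^ i))"

definition abs_trace_nat :: "'a::{field,finite} \<Rightarrow> nat" where
  "abs_trace_nat x = (THE k. k < CHAR('a) \<and> of_nat k = abs_trace x)"

definition zeta :: "nat \<Rightarrow> complex" where
  "zeta p = cis (2 * pi / real p)"

definition psi :: "'a::{field,finite} \<Rightarrow> complex" where
  "psi x = zeta CHAR('a) ^ abs_trace_nat x"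

definition weil_sum :: "nat \<Rightarrow> 'a::{field,finite} \<Rightarrow> complex" where
  "weil_sum s u = (\<Sum>x\<in>UNIV. psi (x ^ s - u * x))"

definition weil_spectrum :: "'a::{field,finite} itself \<Rightarrow> nat \<Rightarrow> complex set" where
  "weil_spectrum (t::'a itself) s = (\<lambda>u::'a. weil_sum s u) ` (UNIV - {0})"

text \<open>The automorphism sigma of Q(zeta_p) with sigma(zeta) = zeta^g, on elements of Z[zeta]:
  an element written as sum_{j<p} c_j zeta^j is sent to sum_{j<p} c_j zeta^(g j).\<close>
definition galois_sigma :: "nat \<Rightarrow> nat \<Rightarrow> complex \<Rightarrow> complex" where
  "galois_sigma p g z = (THE w. \<exists>c::nat \<Rightarrow> int.
      z = (\<Sum>j<p. of_int (c j) * zeta p ^ j) \<and> w = (\<Sum>j<p. of_int (c j) * zeta p ^ (g * j)))"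

definition orbit_of :: "('b \<Rightarrow> 'b) \<Rightarrow> 'b \<Rightarrow> 'b set" where
  "orbit_of f w = {(f ^^ n) w | n. True}"

definition cycle_type :: "('b \<Rightarrow> 'b) \<Rightarrow> 'b set \<Rightarrow> nat multiset" where
  "cycle_type f A = image_mset card (mset_set (orbit_of f ` A))"

end

theory Submission
  imports Defs "HOL-Computational_Algebra.Polynomial_Factorial"
begin


definition cyc :: "nat \<Rightarrow> int poly" where "cyc p = (\<Sum>j<p. [:0,1:]^j)"

lemma mpi_add: "map_poly of_int (p + q) = (map_poly of_int p + map_poly of_int q :: 'b::comm_ring_1 poly)"
  by (rule poly_eqI) (simp add: coeff_map_poly)
lemma mpi_diff: "map_poly of_int (p - q) = (map_poly of_int p - map_poly of_int q :: 'b::comm_ring_1 poly)"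
  by (rule poly_eqI) (simp add: coeff_map_poly)
lemma mpi_mult: "map_poly of_int (p * q) = (map_poly of_int p * map_poly of_int q :: 'b::comm_ring_1 poly)"
  by (rule poly_eqI) (simp add: coeff_map_poly coeff_mult)
lemma mpi_1: "map_poly of_int 1 = (1 :: 'b::comm_ring_1 poly)"
  by simp
lemma mpi_X: "map_poly of_int [:0,1:] = ([:0,1:] :: 'b::comm_ring_1 poly)"
  by (simp add: map_poly_pCons)
lemma mpi_power: "map_poly of_int (p ^ n) = (map_poly of_int p ^ n :: 'b::comm_ring_1 poly)"
  by (induction n) (simp_all add: mpi_mult)
lemma mpi_sum: "map_poly of_int (\<Sum>i\<in>A. f i) = (\<Sum>i\<in>A. map_poly of_int (f i) :: 'b::comm_ring_1 poly)"
  by (induction A rule: infinite_finite_induct) (simp_all add: mpi_add)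
lemma mpi_smult: "map_poly of_int (smult c p) = (smult (of_int c) (map_poly of_int p) :: 'b::comm_ring_1 poly)"
  by (rule poly_eqI) (simp add: coeff_map_poly)
lemma poly_mpi: "poly (map_poly of_int p) (of_int x) = (of_int (poly p x) :: 'b::comm_ring_1)"
  by (induction p) (simp_all add: map_poly_pCons)

lemma poly_cyc_mpi: "poly (map_poly of_int (cyc p)) z = (\<Sum>j<p. z ^ j :: 'b::comm_ring_1)"
  by (simp add: cyc_def mpi_sum mpi_power mpi_X poly_sum poly_power)

lemma degree_cyc: "degree (cyc p) \<le> p - 1"
  unfolding cyc_def
proof (rule degree_sum_le)
  fix j assume "j \<in> {..<p}"
  then show "degree ([:0, 1:] ^ j :: int poly) \<le> p - 1"
    by (metis degree_linear_power diff_Suc_1 lessThan_iff less_Suc_eq_le not0_implies_Suc not_less_zero)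
qed simp

lemma poly_cyc_1: "poly (cyc p) 1 = int p"
  by (simp add: cyc_def poly_sum poly_power)

lemma cyc_split:
  fixes A B :: "int poly"
  assumes "cyc CHAR('a::{field,finite}) = A * B"
  shows "degree A = 0 \<or> degree B = 0"
proof (rule ccontr)
  assume nz: "\<not> (degree A = 0 \<or> degree B = 0)"
  define p where "p = CHAR('a)"
  have pp: "prime p" unfolding p_def
    by (rule prime_CHAR_semidom) (rule finite_imp_CHAR_pos, simp)
  hence p2: "p \<ge> 2" by (simp add: prime_ge_2_nat)
  define L :: "'a poly" where "L = [:-1,1:]"
  define X :: "'a poly" where "X = [:0,1:]"
  have L0: "L \<noteq> 0" by (simp add: L_def)
  have XL: "X - 1 = L" by (simp add: X_def L_def one_pCons)
  have "X ^ p - 1 = (X - 1) * (\<Sum>j<p. X ^ j)" by (rule power_diff_1_eq)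
  moreover have "(X - 1) ^ p = X ^ p - 1"
  proof -
    have cp: "prime CHAR('a poly)" using pp p_def by simp
    have "(X + (-1)) ^ p = X ^ p + (-1) ^ p"
      by (rule freshmans_dream) (use cp p_def in simp_all)
    moreover have "(-1 :: 'a poly) ^ p = - (1 ^ p)"
      by (rule minus_power_prime_CHAR) (use cp p_def in simp_all)
    ultimately show ?thesis by simp
  qed
  ultimately have "L ^ (p - 1) * L = (\<Sum>j<p. X ^ j) * L"
    using XL p2 by (metis (no_types, lifting) mult.commute power_minus_mult zero_less_iff_neq_zero not_numeral_le_zero)
  hence cb: "map_poly of_int (cyc p) = L ^ (p - 1)"
    using L0 by (simp add: cyc_def mpi_sum mpi_power mpi_X X_def)
  define A' :: "'a poly" where "A' = map_poly of_int A"
  define B' :: "'a poly" where "B' = map_poly of_int B"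
  have AB': "A' * B' = L ^ (p - 1)" using cb assms by (simp add: A'_def B'_def mpi_mult p_def)
  have A'0: "A' \<noteq> 0" "B' \<noteq> 0" using AB' L0 by auto
  have ord: "order 1 A' + order 1 B' = p - 1"
    using AB' A'0 order_mult[of A' B' 1] order_power_n_n[of "1::'a" "p-1"] by (simp add: L_def)
  have dAB': "degree A' + degree B' = p - 1"
    using AB' A'0 degree_mult_eq[of A' B'] by (simp add: L_def degree_linear_power)
  have "degree A' \<le> degree A" "degree B' \<le> degree B"
    unfolding A'_def B'_def by (simp_all add: map_poly_degree_leq)
  moreover have "A \<noteq> 0" "B \<noteq> 0" using A'0 A'_def B'_def by auto
  moreover have "degree A + degree B \<le> p - 1"
    using degree_cyc[of p] assms degree_mult_eq[of A B] calculation by (simp add: p_def)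
  ultimately have "order 1 A' = degree A'" "order 1 B' = degree B'" "degree A' = degree A" "degree B' = degree B"
    using ord dAB' order_degree[OF A'0(1), of 1] order_degree[OF A'0(2), of 1] by linarith+
  hence "poly A' 1 = 0" "poly B' 1 = 0" using nz by (simp_all add: order_root)
  hence "of_int (poly A 1) = (0::'a)" "of_int (poly B 1) = (0::'a)"
    unfolding A'_def B'_def using poly_mpi[of _ 1, where 'b='a] by simp_all
  hence "int p dvd poly A 1" "int p dvd poly B 1"
    by (simp_all add: of_int_eq_0_iff_char_dvd p_def)
  hence "int p * int p dvd poly A 1 * poly B 1" by (rule mult_dvd_mono)
  also have "poly A 1 * poly B 1 = int p" using assms poly_cyc_1[of p] by (simp add: p_def)
  finally have "int p * int p dvd int p" .
  hence "\<bar>int p * int p\<bar> \<le> \<bar>int p\<bar>" using p2 by (intro dvd_imp_le_int) auto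
  moreover have "int p * 2 \<le> int p * int p" using p2 by (intro mult_left_mono) auto
  ultimately show False using p2 by simp
qed


lemma zeta_pow: "zeta p ^ k = cis (2 * pi * real k / real p)"
  by (simp add: zeta_def DeMoivre mult_ac)

lemma zeta_pow_p: "p > 0 \<Longrightarrow> zeta p ^ p = 1"
  by (simp add: zeta_pow)

lemma zeta_pow_mod: "p > 0 \<Longrightarrow> zeta p ^ k = zeta p ^ (k mod p)"
proof -
  assume "p > 0"
  have "zeta p ^ k = zeta p ^ (p * (k div p) + k mod p)" by simp
  also have "\<dots> = (zeta p ^ p) ^ (k div p) * zeta p ^ (k mod p)"
    by (simp only: power_add power_mult)
  finally show ?thesis using zeta_pow_p[OF \<open>p > 0\<close>] by simp
qed

lemma zeta_pow_ne1:
  assumes "p > 0" "\<not> p dvd k" shows "zeta p ^ k \<noteq> 1"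
proof
  assume "zeta p ^ k = 1"
  hence e: "zeta p ^ (k mod p) = zeta p ^ 0" using zeta_pow_mod[OF assms(1)] by simp
  have "inj_on (\<lambda>k. cis (2 * pi * real k / real p)) {..<p}"
    using bij_betw_roots_unity[OF assms(1)] by (simp add: bij_betw_def)
  hence "k mod p = 0" using e assms(1) unfolding zeta_pow by (auto simp: inj_on_def)
  thus False using assms(2) by (simp add: dvd_eq_mod_eq_0)
qed

lemma cyc_root:
  assumes "p > 0" "\<not> p dvd g"
  shows "poly (map_poly of_int (cyc p)) (zeta p ^ g) = (0::complex)"
proof -
  let ?z = "zeta p ^ g"
  have "?z ^ p - 1 = (?z - 1) * (\<Sum>j<p. ?z ^ j)" by (rule power_diff_1_eq)
  moreover have "?z ^ p = 1"
    by (metis power_mult mult.commute power_one zeta_pow_p[OF assms(1)])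
  moreover have "?z \<noteq> 1" by (rule zeta_pow_ne1[OF assms])
  ultimately have "(\<Sum>j<p. ?z ^ j) = 0" by simp
  thus ?thesis by (simp add: poly_cyc_mpi)
qed

lemma content_cyc: "p > 0 \<Longrightarrow> content (cyc p) = 1"
proof -
  assume "p > 0"
  have "coeff (cyc p) 0 = 1"
    using \<open>p > 0\<close> by (simp add: cyc_def coeff_sum coeff_0_power power_0_left sum.delta)
  hence "is_unit (content (cyc p))" by (metis content_dvd_coeff)
  hence "normalize (content (cyc p)) = 1" by (rule is_unit_normalize)
  thus ?thesis by (simp only: normalize_content)
qed

lemma eval_smult: "poly (map_poly of_int (smult c F)) z = (of_int c * poly (map_poly of_int F) z :: 'b::comm_ring_1)"
  by (simp add: mpi_smult)

lemma eval_mult: "poly (map_poly of_int (F * G)) z = (poly (map_poly of_int F) z * poly (map_poly of_int G) z :: 'b::comm_ring_1)"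
  by (simp add: mpi_mult)

lemma conj_root:
  fixes P :: "int poly"
  assumes pdef: "p = CHAR('a::{field,finite})" and g: "\<not> p dvd g"
    and rP: "poly (map_poly of_int P) (zeta p) = (0::complex)"
  shows "poly (map_poly of_int P) (zeta p ^ g) = (0::complex)"
proof -
  have pp: "prime p" unfolding pdef
    by (rule prime_CHAR_semidom) (rule finite_imp_CHAR_pos, simp)
  hence p0: "p > 0" by (simp add: prime_gt_0_nat)
  have p1: "\<not> p dvd 1" using pp by (metis prime_nat_iff nat_dvd_1_iff_1 prime_gt_1_nat less_irrefl)
  define r where "r = (\<lambda>M::int poly. poly (map_poly of_int M) (zeta p) = (0::complex))"
  have cyc0: "cyc p \<noteq> 0" using poly_cyc_1[of p] p0 by auto
  have rcyc: "r (cyc p)" using cyc_root[OF p0 p1] by (simp add: r_def)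
  have ex: "\<exists>n. \<exists>M. M \<noteq> 0 \<and> r M \<and> degree M = n" using cyc0 rcyc by blast
  define n where "n = (LEAST n. \<exists>M. M \<noteq> 0 \<and> r M \<and> degree M = n)"
  obtain M where M: "M \<noteq> 0" "r M" "degree M = n" using LeastI_ex[OF ex] unfolding n_def by blast
  have minim: "n \<le> degree M'" if "M' \<noteq> 0" "r M'" for M'
    unfolding n_def by (rule Least_le) (use that in blast)
  have divides: "\<exists>c Q. c \<noteq> 0 \<and> smult c F = M * Q" if rF: "r F" for F
  proof -
    obtain Q R where QR: "pseudo_divmod F M = (Q, R)" by (cases "pseudo_divmod F M") auto
    define c where "c = coeff M (degree M) ^ (Suc (degree F) - degree M)"
    have eq: "smult c F = M * Q + R" and dR: "R = 0 \<or> degree R < degree M"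
      using pseudo_divmod[OF M(1) QR] by (simp_all add: c_def)
    have "R = smult c F - M * Q" using eq by simp
    hence "r R" using rF M(2) unfolding r_def by (simp add: mpi_diff eval_smult eval_mult)
    have "R = 0"
    proof (rule ccontr)
      assume "R \<noteq> 0"
      with dR have "degree R < n" using M(3) by simp
      moreover have "n \<le> degree R" by (rule minim) fact+
      ultimately show False by simp
    qed
    moreover have "c \<noteq> 0" using M(1) by (simp add: c_def)
    ultimately show ?thesis using eq by auto
  qed
  obtain c Q where cQ: "c \<noteq> 0" "smult c (cyc p) = M * Q" using divides[OF rcyc] by blast
  have "primitive_part (smult c (cyc p)) = smult (unit_factor c) (cyc p)"
    using content_cyc[OF p0] primitive_part_smult[of c "cyc p"]
    by (metis content_times_primitive_part smult_1_left)
  hence "smult (sgn c) (cyc p) = primitive_part M * primitive_part Q"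
    using cQ(2) primitive_part_mult[of M Q] by (simp add: unit_factor_int_def)
  hence "smult (sgn c) (smult (sgn c) (cyc p)) = smult (sgn c) (primitive_part M) * primitive_part Q"
    by (simp only: mult_smult_left)
  moreover have "sgn c * sgn c = 1" using cQ(1) by (cases "c > 0") auto
  ultimately have "cyc p = smult (sgn c) (primitive_part M) * primitive_part Q"
    by (simp only: smult_smult smult_1_left)
  have "degree (smult (sgn c) (primitive_part M)) = 0 \<or> degree (primitive_part Q) = 0"
    by (rule cyc_split[where 'a='a], rule \<open>cyc p = _\<close>[unfolded pdef])
  hence dd: "degree M = 0 \<or> degree Q = 0" using cQ(1) by (simp add: sgn_eq_0_iff)
  have "degree M \<noteq> 0"
  proof
    assume "degree M = 0"
    then obtain m where "M = [:m:]" by (rule degree_eq_zeroE)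
    thus False using M(1,2) by (simp add: r_def map_poly_pCons)
  qed
  with dd have "degree Q = 0" by simp
  then obtain q where q: "Q = [:q:]" by (rule degree_eq_zeroE)
  have "q \<noteq> 0" using cQ cyc0 q by auto
  have "of_int c * poly (map_poly of_int (cyc p)) (zeta p ^ g) =
        poly (map_poly of_int M) (zeta p ^ g) * (of_int q :: complex)"
    using arg_cong[OF cQ(2), of "\<lambda>F. poly (map_poly of_int F) (zeta p ^ g) :: complex"]
    by (simp only: eval_smult eval_mult q) (simp add: map_poly_pCons)
  hence rMg: "poly (map_poly of_int M) (zeta p ^ g) = (0::complex)"
    using cyc_root[OF p0 g] \<open>q \<noteq> 0\<close> by simp
  obtain c' Q' where "c' \<noteq> 0" "smult c' P = M * Q'" using divides rP r_def by blast
  hence "poly (map_poly of_int (smult c' P)) (zeta p ^ g) = (poly (map_poly of_int (M * Q')) (zeta p ^ g) :: complex)"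
    by simp
  hence "of_int c' * poly (map_poly of_int P) (zeta p ^ g) = (0::complex)"
    by (simp only: eval_smult eval_mult rMg mult_zero_left)
  thus ?thesis using \<open>c' \<noteq> 0\<close> by simp
qed


lemma poly_monom_sum: "poly (map_poly of_int (\<Sum>j<p. monom (e j) j)) x = (\<Sum>j<p. of_int (e j) * x ^ j :: 'b::comm_ring_1)"
  by (simp add: mpi_sum map_poly_monom poly_sum poly_monom)

lemma galois_sigma_eval:
  assumes pdef: "p = CHAR('a::{field,finite})" and g: "\<not> p dvd g"
  shows "galois_sigma p g (\<Sum>j<p. of_int (c j) * zeta p ^ j) = (\<Sum>j<p. of_int (c j) * zeta p ^ (g*j))"
  unfolding galois_sigma_def
proof (rule the_equality)
  show "\<exists>c'. (\<Sum>j<p. of_int (c j) * zeta p ^ j) = (\<Sum>j<p. of_int (c' j) * zeta p ^ j) \<and>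
          (\<Sum>j<p. of_int (c j) * zeta p ^ (g*j)) = (\<Sum>j<p. of_int (c' j) * zeta p ^ (g*j))"
    by blast
next
  fix w assume "\<exists>c'. (\<Sum>j<p. of_int (c j) * zeta p ^ j) = (\<Sum>j<p. of_int (c' j) * zeta p ^ j) \<and>
          w = (\<Sum>j<p. of_int (c' j) * zeta p ^ (g*j))"
  then obtain c' where c': "(\<Sum>j<p. of_int (c j) * zeta p ^ j) = (\<Sum>j<p. of_int (c' j) * zeta p ^ j)"
     "w = (\<Sum>j<p. of_int (c' j) * zeta p ^ (g*j))" by blast
  define P where "P = (\<Sum>j<p. monom (c j - c' j) j)"
  have "poly (map_poly of_int P) (zeta p) = (\<Sum>j<p. of_int (c j - c' j) * zeta p ^ j :: complex)"
    unfolding P_def by (rule poly_monom_sum)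
  also have "\<dots> = 0" using c'(1) by (simp add: algebra_simps sum_subtractf)
  finally have "poly (map_poly of_int P) (zeta p ^ g) = (0::complex)"
    by (rule conj_root[OF pdef g])
  hence "(\<Sum>j<p. of_int (c j - c' j) * (zeta p ^ g) ^ j :: complex) = 0"
    unfolding P_def poly_monom_sum .
  hence "(\<Sum>j<p. of_int (c j) * zeta p ^ (g*j)) - (\<Sum>j<p. of_int (c' j) * zeta p ^ (g*j)) = (0::complex)"
    by (simp add: of_int_diff left_diff_distrib sum_subtractf power_mult)
  thus "w = (\<Sum>j<p. of_int (c j) * zeta p ^ (g*j))" using c'(2) by simp
qed

lemma sum_fibres_mod:
  fixes p :: nat and f :: "'x \<Rightarrow> nat"
  assumes "finite S" "p > 0"
  shows "(\<Sum>x\<in>S. h (f x mod p)) = (\<Sum>j<p. of_nat (card {x\<in>S. f x mod p = j}) * (h j :: 'b::comm_ring_1))"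
proof -
  have "(\<Sum>x\<in>S. h (f x mod p)) = (\<Sum>x\<in>S. \<Sum>j<p. if f x mod p = j then h j else 0)"
  proof (intro sum.cong refl)
    fix x
    have "(\<Sum>j<p. if f x mod p = j then h j else 0) = (if f x mod p \<in> {..<p} then h (f x mod p) else 0)"
      by (rule sum.delta') simp
    thus "h (f x mod p) = (\<Sum>j<p. if f x mod p = j then h j else 0)" using assms(2) by simp
  qed
  also have "\<dots> = (\<Sum>j<p. \<Sum>x\<in>S. if f x mod p = j then h j else 0)"
    by (rule sum.swap)
  also have "\<dots> = (\<Sum>j<p. of_nat (card {x\<in>S. f x mod p = j}) * h j)"
    using assms(1) by (intro sum.cong refl) (simp add: sum.If_cases Int_def conj_commute)
  finally show ?thesis .
qed

lemma galois_sigma_sum: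
  assumes pdef: "p = CHAR('a::{field,finite})" and g: "\<not> p dvd g" and S: "finite S"
  shows "galois_sigma p g (\<Sum>x\<in>S. zeta p ^ f x) = (\<Sum>x\<in>S. zeta p ^ (g * f x))"
proof -
  have pp: "prime p" unfolding pdef
    by (rule prime_CHAR_semidom) (rule finite_imp_CHAR_pos, simp)
  hence p0: "p > 0" by (simp add: prime_gt_0_nat)
  define c where "c = (\<lambda>j. int (card {x\<in>S. f x mod p = j}))"
  have "(\<Sum>x\<in>S. zeta p ^ f x) = (\<Sum>x\<in>S. zeta p ^ (f x mod p))"
    using zeta_pow_mod[OF p0] by simp
  also have "\<dots> = (\<Sum>j<p. of_int (c j) * zeta p ^ j)"
    using sum_fibres_mod[OF S p0, of "\<lambda>j. zeta p ^ j" f] by (simp add: c_def)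
  finally have "galois_sigma p g (\<Sum>x\<in>S. zeta p ^ f x) = (\<Sum>j<p. of_int (c j) * zeta p ^ (g*j))"
    using galois_sigma_eval[OF pdef g] by simp
  also have "\<dots> = (\<Sum>x\<in>S. zeta p ^ (g * (f x mod p)))"
    using sum_fibres_mod[OF S p0, of "\<lambda>j. zeta p ^ (g*j)" f] by (simp add: c_def)
  also have "\<dots> = (\<Sum>x\<in>S. zeta p ^ (g * f x))"
  proof (intro sum.cong refl)
    fix x
    have "zeta p ^ (g * (f x mod p)) = zeta p ^ ((g * (f x mod p)) mod p)" by (rule zeta_pow_mod[OF p0])
    also have "(g * (f x mod p)) mod p = (g * f x) mod p" by (simp add: mod_mult_right_eq)
    also have "zeta p ^ \<dots> = zeta p ^ (g * f x)" by (rule zeta_pow_mod[OF p0, symmetric])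
    finally show "zeta p ^ (g * (f x mod p)) = zeta p ^ (g * f x)" .
  qed
  finally show ?thesis .
qed



lemma CHAR_prime_ff: "prime CHAR('a::{field,finite})"
  by (rule prime_CHAR_semidom) (rule finite_imp_CHAR_pos, simp)

lemma of_nat_pow_CHAR: "(of_nat k :: 'a::{field,finite}) ^ CHAR('a) = of_nat k"
proof (induction k)
  case 0 then show ?case using CHAR_prime_ff[where 'a='a] by (simp add: prime_gt_0_nat power_0_left)
next
  case (Suc k)
  have "(of_nat k + 1 :: 'a) ^ CHAR('a) = of_nat k ^ CHAR('a) + 1 ^ CHAR('a)"
    by (rule freshmans_dream) (simp_all add: CHAR_prime_ff)
  then show ?case using Suc by (simp add: add.commute)
qed

lemma frob_fix_pow: "(a::'b::monoid_mult) ^ p = a \<Longrightarrow> a ^ (p ^ i) = a"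
proof (induction i)
  case (Suc i)
  have "a ^ (p ^ Suc i) = (a ^ (p ^ i)) ^ p" by (simp only: power_Suc2 power_mult)
  then show ?case using Suc by simp
qed simp

lemma of_nat_inj_CHAR:
  assumes "k1 < CHAR('a::{field,finite})" "k2 < CHAR('a)" "(of_nat k1 :: 'a) = of_nat k2"
  shows "k1 = k2"
  using assms by (simp add: of_nat_eq_iff_cong_CHAR cong_def)

lemma frob_fixed_in_prime_field:
  assumes "(y::'a::{field,finite}) ^ CHAR('a) = y"
  shows "\<exists>k<CHAR('a). of_nat k = y"
proof -
  define p where "p = CHAR('a)"
  have p2: "p \<ge> 2" using CHAR_prime_ff[where 'a='a] by (simp add: p_def prime_ge_2_nat)
  define P :: "'a poly" where "P = [:0,1:] ^ p - [:0,1:]"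
  have cP: "coeff P p = 1"
    using p2 coeff_linear_power[of "0::'a" p] by (simp add: P_def coeff_pCons split: nat.split)
  hence P0: "P \<noteq> 0" by auto
  have dP: "degree P \<le> p"
    unfolding P_def by (rule degree_diff_le) (simp_all add: degree_linear_power, use p2 in simp)
  have R: "{z. poly P z = 0} = {z. z ^ p = z}" by (auto simp: P_def poly_power)
  have "card {z::'a. z ^ p = z} \<le> p" using card_poly_roots_bound[OF P0] dP R by simp
  moreover have sub: "of_nat ` {..<p} \<subseteq> {z::'a. z ^ p = z}" using of_nat_pow_CHAR by (auto simp: p_def)
  moreover have "card (of_nat ` {..<p} :: 'a set) = p"
    by (subst card_image) (auto simp: inj_on_def p_def intro: of_nat_inj_CHAR)
  moreover have "card (of_nat ` {..<p} :: 'a set) \<le> card {z::'a. z ^ p = z}"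
    using sub by (rule card_mono[rotated]) simp
  ultimately have "of_nat ` {..<p} = {z::'a. z ^ p = z}"
    by (intro card_subset_eq) auto
  hence "y \<in> (of_nat ` {..<p} :: 'a set)" using assms by (simp add: p_def)
  then obtain k where "k < p" "y = of_nat k" by blast
  thus ?thesis by (auto simp: p_def)
qed



definition subsp :: "'a::{field,finite} set \<Rightarrow> bool" where
  "subsp H \<longleftrightarrow> 0 \<in> H \<and> (\<forall>x\<in>H. \<forall>y\<in>H. x + y \<in> H) \<and> (\<forall>k. \<forall>x\<in>H. of_nat k * x \<in> H)"

lemma of_nat_mod_CHAR: "(of_nat (k mod CHAR('a)) :: 'a::{field,finite}) = of_nat k"
  by (simp add: of_nat_eq_iff_cong_CHAR cong_def)

lemma subsp_neg: "subsp H \<Longrightarrow> h \<in> H \<Longrightarrow> - h \<in> H"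
proof -
  assume H: "subsp H" "h \<in> H"
  have p1: "CHAR('a) \<ge> 1" using prime_ge_1_nat[OF CHAR_prime_ff[where 'a='a]] .
  have "of_nat (CHAR('a) - 1) + (1::'a) = of_nat CHAR('a)" using p1 by (metis of_nat_Suc Suc_diff_1 less_le_trans zero_less_one add.commute)
  hence "of_nat (CHAR('a) - 1) = (-1::'a)" by (simp add: eq_neg_iff_add_eq_0)
  hence "-h = of_nat (CHAR('a) - 1) * h" by simp
  thus ?thesis using H by (simp add: subsp_def)
qed

lemma subsp_step_inj:
  fixes x :: "'a::{field,finite}"
  assumes H: "subsp H" and x: "x \<notin> H" and h: "h1 \<in> H" "h2 \<in> H"
    and k: "k2 < k1" "k1 < CHAR('a)" and eq: "h1 + of_nat k1 * x = h2 + of_nat k2 * x"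
  shows False
proof -
  define p where "p = CHAR('a)"
  define d where "d = k1 - k2"
  have pp: "prime p" by (simp add: p_def CHAR_prime_ff)
  have d: "0 < d" "d < p" using k by (auto simp: d_def p_def)
  have "of_nat k1 = of_nat d + (of_nat k2 :: 'a)" using k by (simp add: d_def)
  hence "of_nat d * x = h2 + - h1" using eq by (simp add: algebra_simps)
  moreover have "h2 + (- h1) \<in> H" using H h(2) subsp_neg[OF H h(1)] unfolding subsp_def by blast
  ultimately have dx: "of_nat d * x \<in> H" by (simp only:)
  have "\<not> p dvd d" using d by (auto dest: dvd_imp_le)
  hence "[d ^ (p - 1) = 1] (mod p)" using fermat_theorem[OF pp] by blast
  hence A: "(of_nat (d ^ (p - 1)) :: 'a) = 1" using of_nat_eq_iff_cong_CHAR[of "d ^ (p - 1)" 1, where 'a='a] by (simp add: p_def)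
  have B: "d ^ (p - 1) = d ^ (p - 2) * d" using prime_ge_2_nat[OF pp]
    by (metis Suc_diff_Suc Suc_1 less_le_trans lessI power_Suc2)
  from A[unfolded B] have "of_nat (d ^ (p - 2)) * (of_nat d :: 'a) = 1" by (simp only: of_nat_mult)
  hence "of_nat (d ^ (p - 2)) * (of_nat d * x) = x" by (metis mult.assoc mult_1)
  moreover have "of_nat (d ^ (p - 2)) * (of_nat d * x) \<in> H" using dx H unfolding subsp_def by blast
  ultimately show False using x by metis
qed

lemma subsp_card:
  fixes H :: "'a::{field,finite} set"
  assumes "subsp H"
  shows "\<exists>n. CARD('a) = CHAR('a) ^ n * card H"
  using assms
proof (induction "CARD('a) - card H" arbitrary: H rule: less_induct)
  case less
  define p where "p = CHAR('a)"
  have p2: "p \<ge> 2" using CHAR_prime_ff[where 'a='a] by (simp add: p_def prime_ge_2_nat)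
  show ?case
  proof (cases "H = UNIV")
    case True then show ?thesis by (intro exI[of _ 0]) simp
  next
    case False
    then obtain x where x: "x \<notin> H" by blast
    define f where "f = (\<lambda>(h, k). h + of_nat k * x)"
    define H' where "H' = f ` (H \<times> {..<p})"
    have inj: "inj_on f (H \<times> {..<p})"
    proof (rule inj_onI, clarify)
      fix h1 k1 h2 k2 assume a: "h1 \<in> H" "k1 < p" "h2 \<in> H" "k2 < p" "f (h1, k1) = f (h2, k2)"
      hence e: "h1 + of_nat k1 * x = h2 + of_nat k2 * x" by (simp add: f_def)
      have "k1 = k2"
      proof (rule ccontr)
        assume "k1 \<noteq> k2"
        then consider "k2 < k1" | "k1 < k2" by linarith
        thus False
        proof cases
          case 1 show False by (rule subsp_step_inj[OF less.prems x a(1,3) 1 _ e]) (use a in \<open>simp add: p_def\<close>)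
        next
          case 2 show False by (rule subsp_step_inj[OF less.prems x a(3,1) 2 _ e[symmetric]]) (use a in \<open>simp add: p_def\<close>)
        qed
      qed
      thus "h1 = h2 \<and> k1 = k2" using e by simp
    qed
    have cardH': "card H' = card H * p" unfolding H'_def
      by (subst card_image[OF inj]) (simp add: card_cartesian_product)
    have fm: "f (h, k) = f (h, k mod p)" for h k
      by (simp add: f_def of_nat_mod_CHAR p_def)
    have H'_alt: "H' = {h + of_nat k * x | h k. h \<in> H}"
    proof
      show "H' \<subseteq> {h + of_nat k * x | h k. h \<in> H}" by (auto simp: H'_def f_def)
    next
      show "{h + of_nat k * x | h k. h \<in> H} \<subseteq> H'"
      proof clarify
        fix h k assume "h \<in> H"
        moreover have "k mod p < p" using p2 by simp
        ultimately have "f (h, k mod p) \<in> H'" by (auto simp: H'_def)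
        moreover have "h + of_nat k * x = f (h, k mod p)" by (simp add: f_def of_nat_mod_CHAR p_def)
        ultimately show "h + of_nat k * x \<in> H'" by simp
      qed
    qed
    have sH': "subsp H'"
      unfolding subsp_def H'_alt
    proof (intro conjI ballI allI)
      show "0 \<in> {h + of_nat k * x | h k. h \<in> H}"
        using less.prems by (auto simp: subsp_def intro!: exI[of _ 0])
    next
      fix a b assume "a \<in> {h + of_nat k * x | h k. h \<in> H}" "b \<in> {h + of_nat k * x | h k. h \<in> H}"
      then obtain h1 k1 h2 k2 where "a = h1 + of_nat k1 * x" "b = h2 + of_nat k2 * x" "h1 \<in> H" "h2 \<in> H" by blast
      moreover have "h1 + h2 \<in> H" using calculation less.prems by (simp add: subsp_def)
      ultimately show "a + b \<in> {h + of_nat k * x | h k. h \<in> H}"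
        by (intro CollectI exI[of _ "h1 + h2"] exI[of _ "k1 + k2"]) (simp add: algebra_simps)
    next
      fix m :: nat and a assume "a \<in> {h + of_nat k * x | h k. h \<in> H}"
      then obtain h1 k1 where "a = h1 + of_nat k1 * x" "h1 \<in> H" by blast
      moreover have "of_nat m * h1 \<in> H" using calculation less.prems by (simp add: subsp_def)
      ultimately show "of_nat m * a \<in> {h + of_nat k * x | h k. h \<in> H}"
        by (intro CollectI exI[of _ "of_nat m * h1"] exI[of _ "m * k1"]) (simp add: algebra_simps)
    qed
    have "H \<noteq> {}" using less.prems by (auto simp: subsp_def)
    hence "card H \<ge> 1" by (simp add: Suc_le_eq card_gt_0_iff)
    moreover have "card H * 2 \<le> card H * p" using p2 by (rule mult_le_mono2)
    ultimately have "card H < card H'" using cardH' by linarith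
    moreover have "card H' \<le> CARD('a)" by (rule card_mono) auto
    ultimately have "CARD('a) - card H' < CARD('a) - card H" by linarith
    from less.hyps[OF this sH'] obtain n where "CARD('a) = CHAR('a) ^ n * card H'" by blast
    hence "CARD('a) = CHAR('a) ^ Suc n * card H" using cardH' by (simp add: p_def mult_ac)
    thus ?thesis by blast
  qed
qed



lemma card_prime_power: "\<exists>n. CARD('a::{field,finite}) = CHAR('a) ^ n"
proof -
  have "subsp {0::'a}" by (simp add: subsp_def)
  from subsp_card[OF this] show ?thesis by simp
qed

lemma field_degree_eq: "CARD('a::{field,finite}) = CHAR('a) ^ field_degree TYPE('a)"
proof -
  obtain n where n: "CARD('a) = CHAR('a) ^ n" using card_prime_power by blast
  have p1: "CHAR('a) > 1" using prime_gt_1_nat[OF CHAR_prime_ff[where 'a='a]] .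
  have "field_degree TYPE('a) = n"
    unfolding field_degree_def
  proof (rule the_equality)
    show "CHAR('a) ^ n = CARD('a)" using n by simp
  next
    fix m assume "CHAR('a) ^ m = CARD('a)"
    with n show "m = n" using p1 power_inject_exp by metis
  qed
  thus ?thesis using n by simp
qed

lemma pow_card_same: "(x::'a::{field,finite}) ^ CARD('a) = x"
proof (cases "x = 0")
  case False
  have "x * (\<Prod>y\<in>UNIV-{0}. x * y) = x * x ^ (card (UNIV :: 'a set) - 1) * \<Prod>(UNIV-{0})"
    by (simp add: prod.distrib mult_ac)
  also have "x * x ^ (card (UNIV :: 'a set) - 1) = x ^ Suc (card (UNIV :: 'a set) - 1)"
    by (subst power_Suc) auto
  also have "Suc (card (UNIV :: 'a set) - 1) = card (UNIV :: 'a set)"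
    using finite_UNIV_card_ge_0[where ?'a = 'a] by simp
  also have "(\<Prod>y\<in>UNIV-{0}. x * y) = (\<Prod>y\<in>UNIV-{0}. y)"
    by (rule prod.reindex_bij_witness[of _ "\<lambda>y. y / x" "\<lambda>y. x * y"]) (use False in auto)
  finally show ?thesis
    by simp
qed (use finite_UNIV_card_ge_0[where ?'a = 'a] in auto)

lemma abs_trace_frob: "abs_trace (x::'a::{field,finite}) ^ CHAR('a) = abs_trace x"
proof -
  define p where "p = CHAR('a)"
  define n where "n = field_degree TYPE('a)"
  define f where "f = (\<lambda>i. x ^ (p ^ i))"
  have "abs_trace x ^ p = (\<Sum>i<n. f i ^ p)"
    unfolding abs_trace_def p_def n_def f_def by (rule freshmans_dream_sum) (simp_all add: CHAR_prime_ff)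
  also have "\<dots> = (\<Sum>i<n. f (Suc i))" by (simp add: f_def power_mult[symmetric] mult.commute)
  also have "\<dots> = (\<Sum>i<n. f i)"
  proof -
    have "f n = f 0" using pow_card_same[of x] field_degree_eq[where 'a='a] by (simp add: f_def p_def n_def)
    have "(\<Sum>i<Suc n. f i) = f 0 + (\<Sum>i<n. f (Suc i))" by (rule sum.lessThan_Suc_shift)
    moreover have "(\<Sum>i<Suc n. f i) = (\<Sum>i<n. f i) + f n" by simp
    ultimately show ?thesis using \<open>f n = f 0\<close> by simp
  qed
  finally show ?thesis by (simp add: abs_trace_def f_def p_def n_def)
qed

lemma abs_trace_nat_prop:
  "abs_trace_nat (x::'a::{field,finite}) < CHAR('a) \<and> of_nat (abs_trace_nat x) = abs_trace x"
proof -
  obtain k where k: "k < CHAR('a)" "of_nat k = abs_trace x"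
    using frob_fixed_in_prime_field[OF abs_trace_frob[of x]] by blast
  have "abs_trace_nat x = k"
    unfolding abs_trace_nat_def
    by (rule the_equality) (use k of_nat_inj_CHAR[where 'a='a] in auto)
  thus ?thesis using k by simp
qed

lemma abs_trace_scalar: "abs_trace (of_nat g * (y::'a::{field,finite})) = of_nat g * abs_trace y"
proof -
  have "(of_nat g :: 'a) ^ (CHAR('a) ^ i) = of_nat g" for i
    by (rule frob_fix_pow) (rule of_nat_pow_CHAR)
  thus ?thesis by (simp add: abs_trace_def power_mult_distrib sum_distrib_left)
qed

lemma abs_trace_nat_scalar:
  "abs_trace_nat (of_nat g * (y::'a::{field,finite})) = (g * abs_trace_nat y) mod CHAR('a)"
proof -
  have p0: "CHAR('a) > 0" using CHAR_prime_ff[where 'a='a] by (simp add: prime_gt_0_nat)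
  have "of_nat ((g * abs_trace_nat y) mod CHAR('a)) = (of_nat (g * abs_trace_nat y) :: 'a)"
    by (rule of_nat_mod_CHAR)
  also have "\<dots> = abs_trace (of_nat g * y)"
    using abs_trace_nat_prop[of y] by (simp add: abs_trace_scalar)
  also have "\<dots> = of_nat (abs_trace_nat (of_nat g * y))" by (rule sym, rule conjunct2[OF abs_trace_nat_prop])
  finally have "of_nat ((g * abs_trace_nat y) mod CHAR('a)) = (of_nat (abs_trace_nat (of_nat g * y)) :: 'a)" .
  from of_nat_inj_CHAR[OF _ _ this] show ?thesis
    using abs_trace_nat_prop[of "of_nat g * y"] p0 by simp
qed

lemma psi_scalar: "psi (of_nat g * (y::'a::{field,finite})) = zeta CHAR('a) ^ (g * abs_trace_nat y)"
proof -
  have p0: "CHAR('a) > 0" using CHAR_prime_ff[where 'a='a] by (simp add: prime_gt_0_nat)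
  show ?thesis unfolding psi_def abs_trace_nat_scalar by (rule zeta_pow_mod[OF p0, symmetric])
qed



lemma pow_mod_one: "(a::'b::monoid_mult) ^ m = 1 \<Longrightarrow> a ^ k = a ^ (k mod m)"
proof -
  assume a: "a ^ m = 1"
  have "a ^ k = a ^ (m * (k div m) + k mod m)" by simp
  also have "\<dots> = (a ^ m) ^ (k div m) * a ^ (k mod m)" by (simp only: power_add power_mult)
  finally show ?thesis using a by simp
qed

lemma card_ge2: "CARD('a::{field,finite}) \<ge> 2"
proof -
  have "card {0::'a, 1} \<le> CARD('a)" by (rule card_mono) auto
  thus ?thesis by simp
qed

lemma pow_card_minus1: "(x::'a::{field,finite}) \<noteq> 0 \<Longrightarrow> x ^ (CARD('a) - 1) = 1"
proof -
  assume x: "x \<noteq> 0"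
  have "x * x ^ (CARD('a) - 1) = x ^ Suc (CARD('a) - 1)" by (simp only: power_Suc)
  also have "Suc (CARD('a) - 1) = CARD('a)" using card_ge2[where 'a='a] by simp
  also have "x ^ CARD('a) = x" by (rule pow_card_same)
  finally show ?thesis using x by simp
qed

lemma spow_inj:
  assumes cop: "coprime s (CARD('a::{field,finite}) - 1)" and s: "s > 0"
  shows "inj (\<lambda>x::'a. x ^ s)"
proof -
  define q where "q = CARD('a)"
  have q2: "q \<ge> 2" using card_ge2[where 'a='a] by (simp add: q_def)
  obtain t where t: "[s * t = Suc 0] (mod (q - 1))" using cong_solve_coprime_nat cop q_def by blast
  define t' where "t' = t + (q - 1)"
  have "s * t' = s * t + s * (q - 1)" by (simp add: t'_def distrib_left)
  hence "(s * t') mod (q - 1) = (s * t) mod (q - 1)" by simp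
  hence t': "(s * t') mod (q - 1) = 1 mod (q - 1)"
    using t unfolding cong_def by simp
  have t'0: "s * t' > 0" using s q2 by (simp add: t'_def)
  have st: "x ^ (s * t') = x" for x :: 'a
  proof (cases "x = 0")
    case True thus ?thesis using t'0 by simp
  next
    case False
    hence x1: "x ^ (q - 1) = 1" using pow_card_minus1 q_def by blast
    have "x ^ (s * t') = x ^ ((s * t') mod (q - 1))" by (rule pow_mod_one[OF x1])
    also have "\<dots> = x ^ (1 mod (q - 1))" by (simp only: t')
    also have "\<dots> = x ^ 1" by (rule pow_mod_one[OF x1, symmetric])
    finally show ?thesis by simp
  qed
  show ?thesis
  proof (rule injI)
    fix x y :: 'a assume "x ^ s = y ^ s"
    hence "(x ^ s) ^ t' = (y ^ s) ^ t'" by simp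
    thus "x = y" using st[of x] st[of y] by (simp add: power_mult)
  qed
qed

lemma sigma_weil:
  fixes c :: "'a::{field,finite}"
  assumes g: "\<not> CHAR('a) dvd g" and c: "c ^ s = of_nat g" and s: "s > 0"
  shows "galois_sigma CHAR('a) g (weil_sum s v) = weil_sum s ((of_nat g / c) * v)"
proof -
  define G :: 'a where "G = of_nat g"
  have G0: "G \<noteq> 0" using g by (simp add: G_def of_nat_eq_0_iff_char_dvd)
  have c0: "c \<noteq> 0" using c G0 s G_def by (auto simp: power_0_left)
  have "galois_sigma CHAR('a) g (weil_sum s v) =
        galois_sigma CHAR('a) g (\<Sum>x\<in>UNIV. zeta CHAR('a) ^ abs_trace_nat (x ^ s - v * x))"
    by (simp add: weil_sum_def psi_def)
  also have "\<dots> = (\<Sum>x\<in>UNIV. zeta CHAR('a) ^ (g * abs_trace_nat (x ^ s - v * x)))"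
    by (rule galois_sigma_sum[OF refl g]) simp
  also have "\<dots> = (\<Sum>x\<in>UNIV. psi (G * (x ^ s - v * x)))"
    by (simp add: psi_scalar G_def)
  also have "\<dots> = (\<Sum>y\<in>UNIV. psi (G * ((y / c) ^ s - v * (y / c))))"
    by (rule sum.reindex_bij_witness[of _ "\<lambda>y. y / c" "\<lambda>x. x * c"]) (use c0 in auto)
  also have "\<dots> = (\<Sum>y\<in>UNIV. psi (y ^ s - (G / c * v) * y))"
  proof (intro sum.cong refl arg_cong[where f=psi])
    fix y
    have "G * ((y / c) ^ s) = y ^ s" using c G0 c0 by (simp add: power_divide G_def)
    thus "G * ((y / c) ^ s - v * (y / c)) = y ^ s - G / c * v * y"
      by (simp add: right_diff_distrib)
  qed
  finally show ?thesis by (simp add: weil_sum_def G_def)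
qed


theorem lemma2p4:
  fixes s :: nat and g :: nat
  assumes "s > 0"
    and "coprime s (CARD('a::{field,finite}) - 1)"
    and "g < CHAR('a)" and "ord (CHAR('a)) g = CHAR('a) - 1"
  shows "(CHAR('a) = 2 \<longrightarrow>
            cycle_type (galois_sigma (CHAR('a)) g) (weil_spectrum TYPE('a) s)
              = replicate_mset (card (weil_spectrum TYPE('a) s)) 1)
       \<and> (odd (CHAR('a)) \<longrightarrow>
            (\<forall>k \<in># cycle_type (galois_sigma (CHAR('a)) g) (weil_spectrum TYPE('a) s).
               k \<le> (CHAR('a) - 1) div 2))"
proof -
  define p where "p = CHAR('a)"
  have pp: "prime p" by (simp add: p_def CHAR_prime_ff)
  have p2: "p \<ge> 2" using pp by (simp add: prime_ge_2_nat)
  have "ord p g \<noteq> 0" using assms(4) p2 by (simp add: p_def)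
  hence "coprime p g" by (simp add: ord_eq_0)
  have gp: "\<not> p dvd g"
  proof
    assume "p dvd g"
    hence "is_unit p" by (rule coprime_common_divisor[OF \<open>coprime p g\<close> dvd_refl])
    thus False using p2 by simp
  qed
  define G where "G = (of_nat g :: 'a)"
  have G0: "G \<noteq> 0" using gp by (simp add: G_def p_def of_nat_eq_0_iff_char_dvd)
  have injs: "inj (\<lambda>x::'a. x ^ s)" by (rule spow_inj[OF assms(2,1)])
  hence "surj (\<lambda>x::'a. x ^ s)" by (rule finite_UNIV_inj_surj[rotated]) simp
  then obtain c :: 'a where c: "c ^ s = G" by (metis surjD)
  define l where "l = G / c"
  define \<sigma> where "\<sigma> = galois_sigma (CHAR('a)) g"
  have step: "\<sigma> (weil_sum s v) = weil_sum s (l * v)" for v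
    unfolding \<sigma>_def l_def G_def by (rule sigma_weil) (use gp c assms(1) in \<open>simp_all add: p_def G_def\<close>)
  have iter: "(\<sigma> ^^ n) (weil_sum s v) = weil_sum s (l ^ n * v)" for n v
    by (induction n) (simp_all add: step mult.assoc)
  define A where "A = weil_spectrum TYPE('a) s"
  have orb: "orbit_of \<sigma> (weil_sum s u) = {weil_sum s (l ^ n * u) | n. True}" for u
    by (simp add: orbit_of_def iter)
  have finA: "finite A" by (simp add: A_def weil_spectrum_def)
  have memA: "\<exists>u::'a. w = weil_sum s u" if "w \<in> A" for w
    using that unfolding A_def weil_spectrum_def by blast
  have part1: "cycle_type \<sigma> A = replicate_mset (card A) 1" if p2': "p = 2"
  proof -
    have "odd g" using gp p2' by simp
    hence "g mod p = 1" using p2' by (simp add: odd_iff_mod_2_eq_one)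
    hence "G = 1" using of_nat_mod_CHAR[of g, where 'a='a] by (simp add: G_def p_def)
    hence "c ^ s = 1 ^ s" using c by simp
    hence "c = 1" by (rule injD[OF injs])
    hence l1: "l = 1" using \<open>G = 1\<close> by (simp add: l_def)
    have "orbit_of \<sigma> w = {w}" if "w \<in> A" for w
      using memA[OF that] orb l1 by auto
    hence "orbit_of \<sigma> ` A = (\<lambda>w. {w}) ` A" by simp
    hence "cycle_type \<sigma> A = image_mset card (mset_set ((\<lambda>w. {w}) ` A))"
      by (simp add: cycle_type_def)
    also have "mset_set ((\<lambda>w. {w}) ` A) = image_mset (\<lambda>w. {w}) (mset_set A)"
      by (rule image_mset_mset_set[symmetric]) (simp add: inj_on_def)
    also have "image_mset card (image_mset (\<lambda>w. {w}) (mset_set A)) = image_mset (\<lambda>w. 1) (mset_set A)"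
      by (simp add: multiset.map_comp o_def)
    also have "\<dots> = replicate_mset (card A) 1" by (simp add: image_mset_const_eq)
    finally show ?thesis .
  qed
  have part2: "\<forall>k \<in># cycle_type \<sigma> A. k \<le> (p - 1) div 2" if op: "odd p"
  proof -
    define e where "e = (p - 1) div 2"
    have "p \<noteq> 2" using op by auto
    hence "p \<ge> 3" using p2 by linarith
    hence e0: "e > 0" by (simp add: e_def div_greater_zero_iff)
    have pe: "p - 1 = 2 * e" using op by (auto simp: e_def elim!: oddE)
    obtain n where qn: "CARD('a) = p ^ n" using field_degree_eq[where 'a='a] p_def by blast
    have "odd (CARD('a))" using qn op by simp
    hence "even (CARD('a) - 1)" using card_ge2[where 'a='a] by simp
    have "odd s"
    proof
      assume "even s"
      hence "is_unit (2::nat)" by (rule coprime_common_divisor[OF assms(2) _ \<open>even (CARD('a) - 1)\<close>])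
      thus False by simp
    qed
    then obtain h where sh: "s = 2 * h + 1" by (auto elim!: oddE)
    have "[g ^ (p - 1) = 1] (mod p)" by (rule fermat_theorem[OF pp gp])
    hence Gp: "G ^ (p - 1) = 1"
      using of_nat_eq_iff_cong_CHAR[of "g ^ (p - 1)" 1, where 'a='a] by (simp add: G_def p_def)
    have "G ^ (e * s) = G ^ e"
    proof -
      have es: "e * s = (p - 1) * h + e" by (simp only: pe sh) (simp add: algebra_simps)
      have "G ^ (e * s) = (G ^ (p - 1)) ^ h * G ^ e"
        by (simp only: es power_add power_mult)
      thus ?thesis using Gp by simp
    qed
    moreover have "c ^ (e * s) = G ^ e" using c by (metis power_mult mult.commute)
    ultimately have "(l ^ e) ^ s = 1 ^ s" using G0
      by (simp add: l_def power_divide power_mult[symmetric])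
    hence le: "l ^ e = 1" by (rule injD[OF injs])
    have card_orb: "card (orbit_of \<sigma> w) \<le> e" if wA: "w \<in> A" for w
    proof -
      obtain u :: 'a where u: "w = weil_sum s u" using memA[OF wA] by blast
      have "orbit_of \<sigma> w \<subseteq> (\<lambda>m. weil_sum s (l ^ m * u)) ` {..<e}"
      proof
        fix z assume "z \<in> orbit_of \<sigma> w"
        then obtain m where "z = weil_sum s (l ^ m * u)" using orb u by auto
        moreover have "l ^ m = l ^ (m mod e)" by (rule pow_mod_one[OF le])
        moreover have "m mod e < e" using e0 by simp
        ultimately show "z \<in> (\<lambda>m. weil_sum s (l ^ m * u)) ` {..<e}" by auto
      qed
      hence "card (orbit_of \<sigma> w) \<le> card ((\<lambda>m. weil_sum s (l ^ m * u)) ` {..<e})"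
        by (rule card_mono[rotated]) simp
      also have "\<dots> \<le> e" using card_image_le[of "{..<e}"] by simp
      finally show ?thesis .
    qed
    show ?thesis
    proof
      fix k assume "k \<in># cycle_type \<sigma> A"
      then obtain Ob where "Ob \<in># mset_set (orbit_of \<sigma> ` A)" "k = card Ob"
        by (auto simp: cycle_type_def)
      moreover have "finite (orbit_of \<sigma> ` A)" using finA by simp
      ultimately obtain w where "w \<in> A" "k = card (orbit_of \<sigma> w)" by auto
      thus "k \<le> (p - 1) div 2" using card_orb e_def by simp
    qed
  qed
  show ?thesis using part1 part2 by (simp add: p_def A_def \<sigma>_def)
qed


end
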